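(* Every weakly norming graph is edge-transitive. That is, if $G$ is a finite simple graph such that $h \mapsto t_G(|h|)^{1/|E(G)|}$ is a norm on $\mathcal{H}$, then for any two edges $e, e'$ of $G$ there is an automorphism of $G$ mapping $e$ to $e'$.
   Context: Let $\mathcal{H}$ be the class of bounded measurable symmetric functions $h:[0,1]^2\to\mathbb{R}$ (with $h(x,y)=h(y,x)$), functions equal almost everywhere being identified. For a finite simple graph $G$ with vertex set $\{v_1,\ldots,v_n\}$ and nonempty edge set $E(G)$, and $h\in\mathcal{H}$, define the homomorphism density $$t_G(h)=\int_{[0,1]^n}\prod_{\{v_i,v_j\}\in E(G)} h(x_i,x_j)\,dx_1\cdots dx_n.$$ A graph $G$ is called weakly norming if $h\mapsto t_G(|h|)^{1/|E(G)|}$ is a norm on $\mathcal{H}$. *)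

theory Defs
  imports "HOL-Analysis.Analysis"
begin

definition simple_graph :: "nat \<Rightarrow> nat set set \<Rightarrow> bool" where
  "simple_graph n E \<longleftrightarrow> (\<forall>e\<in>E. e \<subseteq> {..<n} \<and> card e = 2)"

definition unit_interval :: "real measure" where
  "unit_interval = restrict_space lborel {0..1}"

definition kernel_class :: "(real \<Rightarrow> real \<Rightarrow> real) set" where
  "kernel_class = {h. (\<lambda>p. h (fst p) (snd p)) \<in> borel_measurable borel
                      \<and> (\<exists>B. \<forall>x y. \<bar>h x y\<bar> \<le> B)
                      \<and> (\<forall>x y. h x y = h y x)}"

text \<open>Homomorphism density t_G(h). Each edge e = {i,j} contributes h(x_i,x_j);
  since h is symmetric the order (Min e, Max e) is immaterial.\<close>
definition hom_density :: "nat \<Rightarrow> nat set set \<Rightarrow> (real \<Rightarrow> real \<Rightarrow> real) \<Rightarrow> real" where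
  "hom_density n E h =
     integral\<^sup>L (PiM {..<n} (\<lambda>_. unit_interval)) (\<lambda>x. \<Prod>e\<in>E. h (x (Min e)) (x (Max e)))"

definition graph_norm :: "nat \<Rightarrow> nat set set \<Rightarrow> (real \<Rightarrow> real \<Rightarrow> real) \<Rightarrow> real" where
  "graph_norm n E h = hom_density n E (\<lambda>x y. \<bar>h x y\<bar>) powr (1 / real (card E))"

text \<open>h \<mapsto> t_G(|h|)^(1/|E|) is a norm on H (functions equal a.e. identified):
  definiteness modulo a.e.-equality, absolute homogeneity, triangle inequality
  (nonnegativity and well-definedness on a.e.-classes are automatic).\<close>
definition weakly_norming :: "nat \<Rightarrow> nat set set \<Rightarrow> bool" where
  "weakly_norming n E \<longleftrightarrow>
     (\<forall>h\<in>kernel_class. graph_norm n E h = 0 \<longleftrightarrow>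
         (AE p in unit_interval \<Otimes>\<^sub>M unit_interval. h (fst p) (snd p) = 0)) \<and>
     (\<forall>h\<in>kernel_class. \<forall>c::real. graph_norm n E (\<lambda>x y. c * h x y) = \<bar>c\<bar> * graph_norm n E h) \<and>
     (\<forall>h\<in>kernel_class. \<forall>g\<in>kernel_class.
         graph_norm n E (\<lambda>x y. h x y + g x y) \<le> graph_norm n E h + graph_norm n E g)"

definition graph_automorphism :: "nat \<Rightarrow> nat set set \<Rightarrow> (nat \<Rightarrow> nat) \<Rightarrow> bool" where
  "graph_automorphism n E \<sigma> \<longleftrightarrow> bij_betw \<sigma> {..<n} {..<n} \<and>
     (\<forall>e. e \<subseteq> {..<n} \<longrightarrow> (e \<in> E \<longleftrightarrow> \<sigma> ` e \<in> E))"

definition edge_transitive :: "nat \<Rightarrow> nat set set \<Rightarrow> bool" where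
  "edge_transitive n E \<longleftrightarrow>
     (\<forall>e\<in>E. \<forall>e'\<in>E. \<exists>\<sigma>. graph_automorphism n E \<sigma> \<and> \<sigma> ` e = e')"

end

theory Submission imports Defs begin

definition FS :: "nat \<Rightarrow> nat \<Rightarrow> (nat \<Rightarrow> nat) set" where
  "FS n k = {..<n} \<rightarrow>\<^sub>E {..<k}"

definition hm :: "nat \<Rightarrow> nat set set \<Rightarrow> nat \<Rightarrow> (nat set \<Rightarrow> nat \<Rightarrow> nat \<Rightarrow> real) \<Rightarrow> real" where
  "hm n E k A = (\<Sum>\<phi>\<in>FS n k. \<Prod>e\<in>E. A e (\<phi> (Min e)) (\<phi> (Max e)))"

lemma finite_FS[simp]: "finite (FS n k)"
  by (simp add: FS_def finite_PiE)

lemma FS_D: "\<phi> \<in> FS n k \<Longrightarrow> i < n \<Longrightarrow> \<phi> i < k"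
  and FS_ext: "\<phi> \<in> FS n k \<Longrightarrow> \<not> i < n \<Longrightarrow> \<phi> i = undefined"
  by (auto simp: FS_def PiE_iff extensional_def)

lemma FS_I: "(\<And>i. i < n \<Longrightarrow> f i < k) \<Longrightarrow> restrict f {..<n} \<in> FS n k"
  by (auto simp: FS_def PiE_iff)

lemma bij_FS:
  assumes "k' > 0"
  shows "bij_betw (\<lambda>(\<psi>,\<alpha>). restrict (\<lambda>i. \<psi> i * k' + \<alpha> i) {..<n}) (FS n k \<times> FS n k') (FS n (k*k'))"
proof (rule bij_betw_byWitness[where f' = "\<lambda>\<phi>. (restrict (\<lambda>i. \<phi> i div k') {..<n}, restrict (\<lambda>i. \<phi> i mod k') {..<n})"])
  have 1: "restrict (\<lambda>i. restrict (\<lambda>i. \<psi> i * k' + \<alpha> i) {..<n} i div k') {..<n} = \<psi>"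
   and 2: "restrict (\<lambda>i. restrict (\<lambda>i. \<psi> i * k' + \<alpha> i) {..<n} i mod k') {..<n} = \<alpha>"
    if h: "\<psi> \<in> FS n k" "\<alpha> \<in> FS n k'" for \<psi> \<alpha>
  proof -
    show "restrict (\<lambda>i. restrict (\<lambda>i. \<psi> i * k' + \<alpha> i) {..<n} i div k') {..<n} = \<psi>"
    proof
      fix i show "restrict (\<lambda>i. restrict (\<lambda>i. \<psi> i * k' + \<alpha> i) {..<n} i div k') {..<n} i = \<psi> i"
        using FS_D[OF h(2), of i] FS_ext[OF h(1), of i] assms by (cases "i < n") auto
    qed
    show "restrict (\<lambda>i. restrict (\<lambda>i. \<psi> i * k' + \<alpha> i) {..<n} i mod k') {..<n} = \<alpha>"
    proof
      fix i show "restrict (\<lambda>i. restrict (\<lambda>i. \<psi> i * k' + \<alpha> i) {..<n} i mod k') {..<n} i = \<alpha> i"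
        using FS_D[OF h(2), of i] FS_ext[OF h(2), of i] assms by (cases "i < n") auto
    qed
  qed
  then show "\<forall>a\<in>FS n k \<times> FS n k'. (\<lambda>\<phi>. (restrict (\<lambda>i. \<phi> i div k') {..<n}, restrict (\<lambda>i. \<phi> i mod k') {..<n}))
      ((\<lambda>(\<psi>,\<alpha>). restrict (\<lambda>i. \<psi> i * k' + \<alpha> i) {..<n}) a) = a"
    by auto
  have 3: "restrict (\<lambda>i. restrict (\<lambda>i. \<phi> i div k') {..<n} i * k' + restrict (\<lambda>i. \<phi> i mod k') {..<n} i) {..<n} = \<phi>" if h: "\<phi> \<in> FS n (k*k')" for \<phi>
  proof
    fix i show "restrict (\<lambda>i. restrict (\<lambda>i. \<phi> i div k') {..<n} i * k' + restrict (\<lambda>i. \<phi> i mod k') {..<n} i) {..<n} i = \<phi> i"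
      using FS_ext[OF h, of i] by (cases "i < n") auto
  qed
  then show "\<forall>a'\<in>FS n (k * k'). (\<lambda>(\<psi>,\<alpha>). restrict (\<lambda>i. \<psi> i * k' + \<alpha> i) {..<n})
      ((\<lambda>\<phi>. (restrict (\<lambda>i. \<phi> i div k') {..<n}, restrict (\<lambda>i. \<phi> i mod k') {..<n})) a') = a'"
    by (simp add: 3)
  have 4: "a * k' + b < k * k'" if "a < k" "b < k'" for a b :: nat
  proof -
    have "a * k' + b < a * k' + k'" using that by simp
    also have "\<dots> = Suc a * k'" by simp
    also have "\<dots> \<le> k * k'" using that by (intro mult_le_mono1) simp
    finally show ?thesis .
  qed
  show "(\<lambda>(\<psi>,\<alpha>). restrict (\<lambda>i. \<psi> i * k' + \<alpha> i) {..<n}) ` (FS n k \<times> FS n k') \<subseteq> FS n (k * k')"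
    using 4 FS_D by (auto intro!: FS_I)
  show "(\<lambda>\<phi>. (restrict (\<lambda>i. \<phi> i div k') {..<n}, restrict (\<lambda>i. \<phi> i mod k') {..<n})) ` FS n (k * k') \<subseteq> FS n k \<times> FS n k'"
    using assms FS_D by (auto intro!: FS_I simp: less_mult_imp_div_less)
qed

definition tens :: "nat \<Rightarrow> (nat \<Rightarrow> nat \<Rightarrow> real) \<Rightarrow> (nat \<Rightarrow> nat \<Rightarrow> real) \<Rightarrow> nat \<Rightarrow> nat \<Rightarrow> real" where
  "tens k' M M' p q = M (p div k') (q div k') * M' (p mod k') (q mod k')"

lemma MinMax_lt: fixes n :: nat assumes "e \<subseteq> {..<n}" "e \<noteq> {}" shows "Min e < n" "Max e < n"
proof -
  have f: "finite e" using finite_subset[OF assms(1)] by simp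
  show "Min e < n" using Min_in[OF f assms(2)] assms(1) by (meson lessThan_iff subsetD)
  show "Max e < n" using Max_in[OF f assms(2)] assms(1) by (meson lessThan_iff subsetD)
qed

lemma hm_tens:
  assumes "k' > 0" and E: "\<forall>e\<in>E. e \<subseteq> {..<n} \<and> e \<noteq> {}"
  shows "hm n E (k*k') (\<lambda>e. tens k' (A e) (A' e)) = hm n E k A * hm n E k' A'"
proof -
  have "hm n E (k*k') (\<lambda>e. tens k' (A e) (A' e))
     = (\<Sum>x\<in>FS n k \<times> FS n k'. (\<lambda>\<phi>. \<Prod>e\<in>E. tens k' (A e) (A' e) (\<phi> (Min e)) (\<phi> (Max e)))
          ((\<lambda>(\<psi>,\<alpha>). restrict (\<lambda>i. \<psi> i * k' + \<alpha> i) {..<n}) x))"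
    unfolding hm_def by (rule sum.reindex_bij_betw[OF bij_FS[OF assms(1)], symmetric])
  also have "\<dots> = (\<Sum>(\<psi>,\<alpha>)\<in>FS n k \<times> FS n k'. (\<Prod>e\<in>E. A e (\<psi> (Min e)) (\<psi> (Max e))) * (\<Prod>e\<in>E. A' e (\<alpha> (Min e)) (\<alpha> (Max e))))"
  proof (rule sum.cong[OF refl])
    fix x assume x: "x \<in> FS n k \<times> FS n k'"
    obtain \<psi> \<alpha> where xe: "x = (\<psi>, \<alpha>)" by (cases x)
    have h: "\<psi> \<in> FS n k" "\<alpha> \<in> FS n k'" using x unfolding xe by simp_all
    have "(\<Prod>e\<in>E. tens k' (A e) (A' e) (restrict (\<lambda>i. \<psi> i * k' + \<alpha> i) {..<n} (Min e)) (restrict (\<lambda>i. \<psi> i * k' + \<alpha> i) {..<n} (Max e))) =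
       (\<Prod>e\<in>E. A e (\<psi> (Min e)) (\<psi> (Max e)) * A' e (\<alpha> (Min e)) (\<alpha> (Max e)))"
    proof (rule prod.cong[OF refl])
      fix e assume "e \<in> E"
      then have "e \<subseteq> {..<n}" "e \<noteq> {}" using E by simp_all
      note mn = MinMax_lt[OF this]
      have a: "\<alpha> (Min e) < k'" "\<alpha> (Max e) < k'" using FS_D[OF h(2)] mn by simp_all
      show "tens k' (A e) (A' e) (restrict (\<lambda>i. \<psi> i * k' + \<alpha> i) {..<n} (Min e)) (restrict (\<lambda>i. \<psi> i * k' + \<alpha> i) {..<n} (Max e)) =
         A e (\<psi> (Min e)) (\<psi> (Max e)) * A' e (\<alpha> (Min e)) (\<alpha> (Max e))"
        using mn a assms(1) by (simp add: tens_def)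
    qed
    then show "(\<lambda>\<phi>. \<Prod>e\<in>E. tens k' (A e) (A' e) (\<phi> (Min e)) (\<phi> (Max e))) ((\<lambda>(\<psi>,\<alpha>). restrict (\<lambda>i. \<psi> i * k' + \<alpha> i) {..<n}) x) =
        (case x of (\<psi>,\<alpha>) \<Rightarrow> (\<Prod>e\<in>E. A e (\<psi> (Min e)) (\<psi> (Max e))) * (\<Prod>e\<in>E. A' e (\<alpha> (Min e)) (\<alpha> (Max e))))"
      by (simp add: xe prod.distrib)
  qed
  also have "\<dots> = hm n E k A * hm n E k' A'"
    unfolding hm_def sum_product sum.cartesian_product by simp
  finally show ?thesis .
qed


lemma hm_reindex:
  assumes "k > 0" and E: "\<forall>e\<in>E. e \<subseteq> {..<n} \<and> e \<noteq> {}"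
  shows "hm n E (N*k) B = (\<Sum>(\<psi>,\<alpha>)\<in>FS n N \<times> FS n k. \<Prod>f\<in>E. B f (\<psi> (Min f) * k + \<alpha> (Min f)) (\<psi> (Max f) * k + \<alpha> (Max f)))"
proof -
  have "hm n E (N*k) B
     = (\<Sum>x\<in>FS n N \<times> FS n k. (\<lambda>\<phi>. \<Prod>f\<in>E. B f (\<phi> (Min f)) (\<phi> (Max f)))
          ((\<lambda>(\<psi>,\<alpha>). restrict (\<lambda>i. \<psi> i * k + \<alpha> i) {..<n}) x))"
    unfolding hm_def by (rule sum.reindex_bij_betw[OF bij_FS[OF assms(1)], symmetric])
  also have "\<dots> = (\<Sum>(\<psi>,\<alpha>)\<in>FS n N \<times> FS n k. \<Prod>f\<in>E. B f (\<psi> (Min f) * k + \<alpha> (Min f)) (\<psi> (Max f) * k + \<alpha> (Max f)))"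
  proof (rule sum.cong[OF refl])
    fix x assume x: "x \<in> FS n N \<times> FS n k"
    obtain \<psi> \<alpha> where xe: "x = (\<psi>, \<alpha>)" by (cases x)
    have "(\<Prod>f\<in>E. B f (restrict (\<lambda>i. \<psi> i * k + \<alpha> i) {..<n} (Min f)) (restrict (\<lambda>i. \<psi> i * k + \<alpha> i) {..<n} (Max f))) =
       (\<Prod>f\<in>E. B f (\<psi> (Min f) * k + \<alpha> (Min f)) (\<psi> (Max f) * k + \<alpha> (Max f)))"
    proof (rule prod.cong[OF refl])
      fix e assume "e \<in> E"
      then have "e \<subseteq> {..<n}" "e \<noteq> {}" using E by simp_all
      note mn = MinMax_lt[OF this]
      show "B e (restrict (\<lambda>i. \<psi> i * k + \<alpha> i) {..<n} (Min e)) (restrict (\<lambda>i. \<psi> i * k + \<alpha> i) {..<n} (Max e)) =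
         B e (\<psi> (Min e) * k + \<alpha> (Min e)) (\<psi> (Max e) * k + \<alpha> (Max e))"
        using mn by simp
    qed
    then show "(\<lambda>\<phi>. \<Prod>f\<in>E. B f (\<phi> (Min f)) (\<phi> (Max f))) ((\<lambda>(\<psi>,\<alpha>). restrict (\<lambda>i. \<psi> i * k + \<alpha> i) {..<n}) x) =
        (case x of (\<psi>,\<alpha>) \<Rightarrow> \<Prod>f\<in>E. B f (\<psi> (Min f) * k + \<alpha> (Min f)) (\<psi> (Max f) * k + \<alpha> (Max f)))"
      by (simp add: xe)
  qed
  finally show ?thesis .
qed

lemma card_FS: "card (FS n k) = k ^ n"
  by (simp add: FS_def card_PiE)

lemma sum_snd_cart: "finite X \<Longrightarrow> finite Y \<Longrightarrow> (\<Sum>(x,y)\<in>X \<times> Y. (g y::real)) = real (card X) * (\<Sum>y\<in>Y. g y)"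
  by (simp add: sum.cartesian_product[symmetric] sum_constant)

definition symk :: "nat \<Rightarrow> (nat \<Rightarrow> nat \<Rightarrow> real) \<Rightarrow> bool" where
  "symk k M \<longleftrightarrow> (\<forall>a<k. \<forall>b<k. M a b = M b a)"

definition posk :: "nat \<Rightarrow> (nat \<Rightarrow> nat \<Rightarrow> real) \<Rightarrow> bool" where
  "posk k M \<longleftrightarrow> (\<forall>a<k. \<forall>b<k. 0 < M a b)"

definition nrm :: "nat \<Rightarrow> nat set set \<Rightarrow> nat \<Rightarrow> (nat \<Rightarrow> nat \<Rightarrow> real) \<Rightarrow> real" where
  "nrm n E K M = hm n E K (\<lambda>_ a b. \<bar>M a b\<bar>) powr (1 / real (card E))"

definition blk :: "nat \<Rightarrow> real \<Rightarrow> nat" where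
  "blk k x = min (k - 1) (nat \<lfloor>real k * x\<rfloor>)"

definition stepk :: "nat \<Rightarrow> (nat \<Rightarrow> nat \<Rightarrow> real) \<Rightarrow> real \<Rightarrow> real \<Rightarrow> real" where
  "stepk k M x y = M (blk k x) (blk k y)"

lemma blk_lt: "k > 0 \<Longrightarrow> blk k x < k"
  by (simp add: blk_def)

lemma blk_meas[measurable]: "blk k \<in> borel \<rightarrow>\<^sub>M count_space UNIV"
  unfolding blk_def by measurable

lemma stepk_meas: "(\<lambda>p. stepk k M (fst p) (snd p)) \<in> borel_measurable borel"
  unfolding stepk_def borel_prod[symmetric]
proof (rule measurable_compose_countable[where f = "\<lambda>i p. M i (blk k (snd p))"])
  fix i show "(\<lambda>p. M i (blk k (snd p))) \<in> borel_measurable (borel \<Otimes>\<^sub>M borel)"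
    by (rule measurable_compose_countable[where f = "\<lambda>j p. M i j"]) measurable
qed measurable


lemma stepk_kernel:
  assumes k: "k > 0" and s: "symk k M"
  shows "stepk k M \<in> kernel_class"
  unfolding kernel_class_def
proof (intro CollectI conjI)
  show "(\<lambda>p. stepk k M (fst p) (snd p)) \<in> borel_measurable borel" by (rule stepk_meas)
  show "\<exists>B. \<forall>x y. \<bar>stepk k M x y\<bar> \<le> B"
  proof (intro exI allI)
    fix x y
    have a: "blk k x \<in> {..<k}" "blk k y \<in> {..<k}" using blk_lt[OF k] by auto
    have "\<bar>stepk k M x y\<bar> \<le> (\<Sum>b<k. \<bar>M (blk k x) b\<bar>)"
      unfolding stepk_def by (rule member_le_sum[OF a(2)]) simp_all
    also have "\<dots> \<le> (\<Sum>a<k. \<Sum>b<k. \<bar>M a b\<bar>)"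
      by (rule member_le_sum[OF a(1)]) (simp_all add: sum_nonneg)
    finally show "\<bar>stepk k M x y\<bar> \<le> (\<Sum>a<k. \<Sum>b<k. \<bar>M a b\<bar>)" .
  qed
  show "\<forall>x y. stepk k M x y = stepk k M y x"
    using s blk_lt[OF k] by (simp add: stepk_def symk_def)
qed

definition Yint :: "nat \<Rightarrow> nat \<Rightarrow> real set" where
  "Yint k a = (if a + 1 < k then {real a / real k ..< (real a + 1) / real k} else {real a / real k .. 1})"

lemma Y_eq:
  assumes k: "k > 0" and a: "a < k"
  shows "{x \<in> {0..1}. blk k x = a} = Yint k a"
proof -
  have key: "blk k x = a \<longleftrightarrow> x \<in> Yint k a" if x: "0 \<le> x" "x \<le> 1" for x
  proof -
    have kx: "0 \<le> real k * x" "real k * x \<le> real k" using x k by (simp_all add: mult_left_le)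
    have fl: "nat \<lfloor>real k * x\<rfloor> = a \<longleftrightarrow> real a \<le> real k * x \<and> real k * x < real a + 1"
      using kx by (auto simp: nat_eq_iff floor_eq_iff)
    have fl2: "k - 1 \<le> nat \<lfloor>real k * x\<rfloor> \<longleftrightarrow> real (k - 1) \<le> real k * x"
      using kx by (simp add: le_nat_iff le_floor_iff)
    have d1: "real a / real k \<le> x \<longleftrightarrow> real a \<le> real k * x" using k by (simp add: divide_le_eq mult.commute)
    have d2: "x < (real a + 1) / real k \<longleftrightarrow> real k * x < real a + 1" using k by (simp add: less_divide_eq mult.commute)
    show ?thesis
    proof (cases "a + 1 < k")
      case True
      have "blk k x = a \<longleftrightarrow> nat \<lfloor>real k * x\<rfloor> = a"
        using True unfolding blk_def by (auto simp: min_def)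
      then show ?thesis using True fl d1 d2 by (simp add: Yint_def)
    next
      case False
      then have ak: "a = k - 1" using a by simp
      have "blk k x = a \<longleftrightarrow> k - 1 \<le> nat \<lfloor>real k * x\<rfloor>"
        unfolding blk_def ak by (auto simp: min_def)
      also have "\<dots> \<longleftrightarrow> real a \<le> real k * x" using fl2 ak by simp
      finally show ?thesis using False d1 x by (simp add: Yint_def)
    qed
  qed
  have sub: "Yint k a \<subseteq> {0..1}"
  proof -
    have h1: "real a / real k \<ge> 0" by simp
    have h2: "(real a + 1) / real k \<le> 1" using a k by (simp add: divide_le_eq)
    show ?thesis
    proof
      fix x assume "x \<in> Yint k a"
      then have x1: "real a / real k \<le> x" and x2: "x \<le> 1 \<or> x < (real a + 1) / real k"
        by (auto simp: Yint_def split: if_splits)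
      have "0 \<le> x" using x1 h1 by linarith
      moreover have "x \<le> 1" using x2 h2 by linarith
      ultimately show "x \<in> {0..1}" by simp
    qed
  qed
  show ?thesis using key sub by auto
qed

lemma unit_sets: "{0..1::real} \<inter> space lborel \<in> sets lborel" by simp

lemma Yint_sets: "Yint k a \<in> sets borel"
  unfolding Yint_def by simp

lemma emeasure_Y:
  assumes k: "k > 0" and a: "a < k"
  shows "emeasure unit_interval {x \<in> {0..1}. blk k x = a} = ennreal (1 / real k)"
    and "{x \<in> {0..1}. blk k x = a} \<in> sets unit_interval"
proof -
  have sub: "Yint k a \<subseteq> {0..1}" using Y_eq[OF k a] by auto
  have "emeasure unit_interval (Yint k a) = emeasure lborel (Yint k a)"
    unfolding unit_interval_def by (rule emeasure_restrict_space[OF unit_sets sub])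
  also have "\<dots> = ennreal (1 / real k)"
  proof (cases "a + 1 < k")
    case True
    have "real a / real k \<le> (real a + 1) / real k" using k by (simp add: divide_right_mono)
    then show ?thesis using True k by (simp add: Yint_def diff_divide_distrib[symmetric])
  next
    case False
    then have ak: "real a = real k - 1" using a by linarith
    have le: "real a / real k \<le> 1" using a k by simp
    have "1 - real a / real k = 1 / real k" using k by (simp add: ak field_simps)
    then show ?thesis using False le by (simp add: Yint_def)
  qed
  finally show "emeasure unit_interval {x \<in> {0..1}. blk k x = a} = ennreal (1 / real k)"
    using Y_eq[OF k a] by simp
  show "{x \<in> {0..1}. blk k x = a} \<in> sets unit_interval"
    unfolding Y_eq[OF k a] unit_interval_def
    using sub Yint_sets by (simp add: sets_restrict_space_iff)
qed

lemma hom_density_step: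
  assumes k: "k > 0" and E: "\<forall>e\<in>E. e \<subseteq> {..<n} \<and> e \<noteq> {}"
  shows "hom_density n E (stepk k M) = hm n E k (\<lambda>_. M) / real k ^ n"
proof -
  have cl: "{0..1::real} \<in> sets lborel" unfolding sets_lborel by (rule borel_closed) simp
  interpret product_sigma_finite "\<lambda>_::nat. unit_interval"
    using sigma_finite_measure_restrict_space[OF sigma_finite_lborel cl]
    by (simp add: product_sigma_finite_def unit_interval_def)
  define P where "P = PiM {..<n} (\<lambda>_. unit_interval)"
  define Y where "Y a = {x \<in> {0..1}. blk k x = a}" for a
  define Z where "Z \<phi> = PiE {..<n} (\<lambda>i. Y (\<phi> i))" for \<phi>
  define G where "G \<phi> = (\<Prod>e\<in>E. M (\<phi> (Min e)) (\<phi> (Max e)))" for \<phi>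
  have spP: "space P = PiE {..<n} (\<lambda>_. {0..1})"
    by (simp add: P_def space_PiM unit_interval_def space_restrict_space)
  have Ys: "Y (\<phi> i) \<in> sets unit_interval" if "\<phi> \<in> FS n k" "i < n" for \<phi> i
    unfolding Y_def by (rule emeasure_Y(2)[OF k FS_D[OF that]])
  have Zs: "Z \<phi> \<in> sets P" if "\<phi> \<in> FS n k" for \<phi>
    unfolding Z_def P_def by (rule sets_PiM_I_finite) (use Ys[OF that] in auto)
  have Zm: "emeasure P (Z \<phi>) = ennreal ((1 / real k) ^ n)" if "\<phi> \<in> FS n k" for \<phi>
  proof -
    have "emeasure P (Z \<phi>) = (\<Prod>i<n. emeasure unit_interval (Y (\<phi> i)))"
      unfolding P_def Z_def by (rule emeasure_PiM) (use Ys[OF that] in auto)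
    also have "\<dots> = (\<Prod>i<n. ennreal (1 / real k))"
    proof (rule prod.cong[OF refl])
      fix i assume "i \<in> {..<n}"
      then have "i < n" by simp
      show "emeasure unit_interval (Y (\<phi> i)) = ennreal (1 / real k)"
        unfolding Y_def by (rule emeasure_Y(1)[OF k FS_D[OF that \<open>i < n\<close>]])
    qed
    also have "\<dots> = ennreal ((1 / real k) ^ n)"
      by (simp add: ennreal_power)
    finally show ?thesis .
  qed
  have Zmeas: "measure P (Z \<phi>) = (1 / real k) ^ n" if "\<phi> \<in> FS n k" for \<phi>
    using Zm[OF that] by (simp add: measure_def)
  have pw: "(\<Prod>e\<in>E. stepk k M (x (Min e)) (x (Max e))) = (\<Sum>\<phi>\<in>FS n k. G \<phi> * indicator (Z \<phi>) x)"
    if x: "x \<in> space P" for x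
  proof -
    define \<psi> where "\<psi> = restrict (\<lambda>i. blk k (x i)) {..<n}"
    have \<psi>: "\<psi> \<in> FS n k" unfolding \<psi>_def by (rule FS_I) (simp add: blk_lt[OF k])
    have xP: "x \<in> PiE {..<n} (\<lambda>_. {0..1})" using x spP by simp
    have xi: "x i \<in> {0..1}" if "i < n" for i using PiE_mem[OF xP] that by simp
    have xe: "x \<in> extensional {..<n}" using xP by (simp add: PiE_iff)
    have ind: "indicator (Z \<phi>) x = (if \<phi> = \<psi> then 1 else (0::real))" if \<phi>: "\<phi> \<in> FS n k" for \<phi>
    proof -
      have "x \<in> Z \<phi> \<longleftrightarrow> (\<forall>i<n. blk k (x i) = \<phi> i)"
      proof
        assume "x \<in> Z \<phi>"
        then show "\<forall>i<n. blk k (x i) = \<phi> i" unfolding Z_def Y_def using PiE_mem by fastforce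
      next
        assume h: "\<forall>i<n. blk k (x i) = \<phi> i"
        show "x \<in> Z \<phi>" unfolding Z_def Y_def PiE_iff using h xi xe by simp
      qed
      also have "\<dots> \<longleftrightarrow> \<phi> = \<psi>"
      proof
        assume h: "\<forall>i<n. blk k (x i) = \<phi> i"
        show "\<phi> = \<psi>"
        proof
          fix i show "\<phi> i = \<psi> i" using h FS_ext[OF \<phi>, of i] by (cases "i < n") (auto simp: \<psi>_def)
        qed
      qed (simp add: \<psi>_def)
      finally show ?thesis by (simp add: indicator_def)
    qed
    have "(\<Sum>\<phi>\<in>FS n k. G \<phi> * indicator (Z \<phi>) x) = (\<Sum>\<phi>\<in>FS n k. if \<phi> = \<psi> then G \<phi> else 0)"
      by (rule sum.cong[OF refl]) (simp add: ind)
    also have "\<dots> = G \<psi>" using \<psi> by simp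
    also have "\<dots> = (\<Prod>e\<in>E. stepk k M (x (Min e)) (x (Max e)))"
      unfolding G_def stepk_def
    proof (rule prod.cong[OF refl])
      fix e assume "e \<in> E"
      then have "e \<subseteq> {..<n}" "e \<noteq> {}" using E by simp_all
      note mn = MinMax_lt[OF this]
      show "M (\<psi> (Min e)) (\<psi> (Max e)) = M (blk k (x (Min e))) (blk k (x (Max e)))"
        using mn by (simp add: \<psi>_def)
    qed
    finally show ?thesis by simp
  qed
  have "hom_density n E (stepk k M) = integral\<^sup>L P (\<lambda>x. \<Sum>\<phi>\<in>FS n k. G \<phi> * indicator (Z \<phi>) x)"
    unfolding hom_density_def P_def[symmetric] by (rule Bochner_Integration.integral_cong[OF refl pw])
  also have "\<dots> = (\<Sum>\<phi>\<in>FS n k. integral\<^sup>L P (\<lambda>x. G \<phi> * indicator (Z \<phi>) x))"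
  proof (rule Bochner_Integration.integral_sum)
    fix \<phi> assume \<phi>: "\<phi> \<in> FS n k"
    show "integrable P (\<lambda>x. G \<phi> * indicator (Z \<phi>) x)"
      by (rule integrable_mult_right, rule integrable_real_indicator[OF Zs[OF \<phi>]]) (simp add: Zm[OF \<phi>])
  qed
  also have "\<dots> = (\<Sum>\<phi>\<in>FS n k. G \<phi> * (1 / real k) ^ n)"
  proof (rule sum.cong[OF refl])
    fix \<phi> assume \<phi>: "\<phi> \<in> FS n k"
    have "Z \<phi> \<inter> space P = Z \<phi>" using sets.sets_into_space[OF Zs[OF \<phi>]] by blast
    then show "integral\<^sup>L P (\<lambda>x. G \<phi> * indicator (Z \<phi>) x) = G \<phi> * (1 / real k) ^ n"
      using Zmeas[OF \<phi>] by simp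
  qed
  also have "\<dots> = hm n E k (\<lambda>_. M) / real k ^ n"
    by (simp add: hm_def G_def sum_distrib_right[symmetric] power_one_over divide_inverse power_inverse)
  finally show ?thesis .
qed


locale wg =
  fixes n :: nat and E :: "nat set set"
  assumes E_sub: "\<forall>e\<in>E. e \<subseteq> {..<n} \<and> card e = 2" and E_ne: "E \<noteq> {}"
  and tri: "\<And>K M M'. K > 0 \<Longrightarrow> symk K M \<Longrightarrow> symk K M' \<Longrightarrow>
      nrm n E K (\<lambda>a b. M a b + M' a b) \<le> nrm n E K M + nrm n E K M'"
begin

lemma E_sub': "\<forall>e\<in>E. e \<subseteq> {..<n} \<and> e \<noteq> {}"
  using E_sub by fastforce

lemma finE: "finite E"
proof -
  have "E \<subseteq> Pow {..<n}" using E_sub by auto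
  then show ?thesis using finite_subset by blast
qed

lemma m_pos: "card E > 0"
  using finE E_ne by (simp add: card_gt_0_iff)

lemma edge_props: assumes "e \<in> E"
  shows "Min e < n" "Max e < n" "Min e \<noteq> Max e" "{Min e, Max e} = e"
proof -
  have s: "e \<subseteq> {..<n}" and c: "card e = 2" using E_sub assms by auto
  then obtain a b where ab: "e = {a, b}" "a \<noteq> b" by (meson card_2_iff)
  show "Min e < n" "Max e < n" using MinMax_lt[OF s] ab by auto
  show "Min e \<noteq> Max e" "{Min e, Max e} = e" using ab by (cases "a < b"; auto simp: min_def max_def)+
qed

lemma n_pos: "n > 0"
  using E_ne edge_props(1) by fastforce

lemma hm_zero: "hm n E K (\<lambda>_ a b. 0) = 0"
  using m_pos by (simp add: hm_def)

lemma nrm_zero: "nrm n E K (\<lambda>a b. 0) = 0"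
  by (simp add: nrm_def hm_zero)

lemma hm_nonneg: "(\<And>e a b. e \<in> E \<Longrightarrow> a < K \<Longrightarrow> b < K \<Longrightarrow> 0 \<le> A e a b) \<Longrightarrow> 0 \<le> hm n E K A"
  unfolding hm_def
  by (intro sum_nonneg prod_nonneg) (meson FS_D edge_props(1,2))

lemma hm_pos: "K > 0 \<Longrightarrow> (\<And>e a b. e \<in> E \<Longrightarrow> a < K \<Longrightarrow> b < K \<Longrightarrow> 0 < A e a b) \<Longrightarrow> 0 < hm n E K A"
  unfolding hm_def
proof (intro sum_pos prod_pos)
  assume "K > 0"
  then have "restrict (\<lambda>i. 0) {..<n} \<in> FS n K" by (intro FS_I) auto
  then show "FS n K \<noteq> {}" by auto
qed (simp_all add: FS_D edge_props(1,2))

lemma nrm_scale: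
  assumes c: "c \<ge> 0"
  shows "nrm n E K (\<lambda>a b. c * M a b) = c * nrm n E K M"
proof -
  have "hm n E K (\<lambda>_ a b. \<bar>c * M a b\<bar>) = c ^ card E * hm n E K (\<lambda>_ a b. \<bar>M a b\<bar>)"
    unfolding hm_def using c
    by (simp add: abs_mult prod.distrib sum_distrib_left)
  moreover have "(c ^ card E * X) powr (1 / real (card E)) = c * X powr (1 / real (card E))" if "X \<ge> 0" for X
  proof (cases "c = 0")
    case True then show ?thesis using m_pos by simp
  next
    case False
    then have cp: "c > 0" using c by simp
    have "(c ^ card E * X) powr (1 / real (card E)) = (c ^ card E) powr (1 / real (card E)) * X powr (1 / real (card E))"
      using cp that by (simp add: powr_mult)
    also have "(c ^ card E) powr (1 / real (card E)) = c"
      using cp m_pos by (simp add: powr_realpow[symmetric] powr_powr)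
    finally show ?thesis .
  qed
  ultimately show ?thesis unfolding nrm_def
    by (simp add: hm_nonneg)
qed

lemma tri_sum:
  assumes "finite S" "K > 0" "\<And>s. s \<in> S \<Longrightarrow> symk K (M s)"
  shows "nrm n E K (\<lambda>a b. \<Sum>s\<in>S. M s a b) \<le> (\<Sum>s\<in>S. nrm n E K (M s))"
  using assms
proof (induction S rule: finite_induct)
  case empty then show ?case by (simp add: nrm_zero)
next
  case (insert x F)
  have sF: "symk K (\<lambda>a b. \<Sum>s\<in>F. M s a b)"
    using insert.prems(2) unfolding symk_def by (auto intro!: sum.cong)
  have "nrm n E K (\<lambda>a b. \<Sum>s\<in>insert x F. M s a b) = nrm n E K (\<lambda>a b. M x a b + (\<Sum>s\<in>F. M s a b))"
    using insert.hyps by simp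
  also have "\<dots> \<le> nrm n E K (M x) + nrm n E K (\<lambda>a b. \<Sum>s\<in>F. M s a b)"
    using tri[OF insert.prems(1) insert.prems(2)[of x] sF] by simp
  also have "\<dots> \<le> nrm n E K (M x) + (\<Sum>s\<in>F. nrm n E K (M s))"
    using insert.IH insert.prems by simp
  finally show ?case using insert.hyps by simp
qed

definition Udec :: "nat \<Rightarrow> (nat \<Rightarrow> nat \<Rightarrow> real) \<Rightarrow> nat set \<Rightarrow> nat \<Rightarrow> nat \<Rightarrow> real" where
  "Udec k M e p q = (if {p div k, q div k} = e then M (p mod k) (q mod k) else 0)"

lemma Udec_eval: "b < k \<Longrightarrow> b' < k \<Longrightarrow> Udec k M e (a * k + b) (a' * k + b') = (if {a, a'} = e then M b b' else 0)"
  by (simp add: Udec_def)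

lemma decA:
  assumes k: "k > 0" and e: "e \<in> E" and nn: "\<forall>a<k. \<forall>b<k. 0 \<le> M a b"
  shows "hm n E (n*k) (\<lambda>_. Udec k M e) \<le> real n ^ n * hm n E k (\<lambda>_. M)"
proof -
  have "hm n E (n*k) (\<lambda>_. Udec k M e) = (\<Sum>(\<psi>,\<alpha>)\<in>FS n n \<times> FS n k. \<Prod>f\<in>E. Udec k M e (\<psi> (Min f) * k + \<alpha> (Min f)) (\<psi> (Max f) * k + \<alpha> (Max f)))"
    by (rule hm_reindex[OF k E_sub'])
  also have "\<dots> \<le> (\<Sum>(\<psi>,\<alpha>)\<in>FS n n \<times> FS n k. \<Prod>f\<in>E. M (\<alpha> (Min f)) (\<alpha> (Max f)))"
  proof (rule sum_mono)
    fix x assume x: "x \<in> FS n n \<times> FS n k"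
    obtain \<psi> \<alpha> where xe: "x = (\<psi>, \<alpha>)" by (cases x)
    have h: "\<alpha> \<in> FS n k" using x unfolding xe by simp
    have "(\<Prod>f\<in>E. Udec k M e (\<psi> (Min f) * k + \<alpha> (Min f)) (\<psi> (Max f) * k + \<alpha> (Max f))) \<le> (\<Prod>f\<in>E. M (\<alpha> (Min f)) (\<alpha> (Max f)))"
    proof (rule prod_mono)
      fix f assume f: "f \<in> E"
      have a: "\<alpha> (Min f) < k" "\<alpha> (Max f) < k" using FS_D[OF h] edge_props[OF f] by simp_all
      show "0 \<le> Udec k M e (\<psi> (Min f) * k + \<alpha> (Min f)) (\<psi> (Max f) * k + \<alpha> (Max f)) \<and>
          Udec k M e (\<psi> (Min f) * k + \<alpha> (Min f)) (\<psi> (Max f) * k + \<alpha> (Max f)) \<le> M (\<alpha> (Min f)) (\<alpha> (Max f))"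
        using a nn by (simp add: Udec_eval)
    qed
    then show "(case x of (\<psi>, \<alpha>) \<Rightarrow> \<Prod>f\<in>E. Udec k M e (\<psi> (Min f) * k + \<alpha> (Min f)) (\<psi> (Max f) * k + \<alpha> (Max f)))
        \<le> (case x of (\<psi>, \<alpha>) \<Rightarrow> \<Prod>f\<in>E. M (\<alpha> (Min f)) (\<alpha> (Max f)))" by (simp add: xe)
  qed
  also have "\<dots> = real (card (FS n n)) * hm n E k (\<lambda>_. M)"
    unfolding hm_def by (rule sum_snd_cart) simp_all
  also have "\<dots> = real n ^ n * hm n E k (\<lambda>_. M)"
    by (simp add: card_FS)
  finally show ?thesis .
qed

lemma decB:
  assumes k: "k > 0" and x: "\<And>e. e \<in> E \<Longrightarrow> 0 \<le> x e" and nn: "\<And>e a b. e \<in> E \<Longrightarrow> a < k \<Longrightarrow> b < k \<Longrightarrow> 0 \<le> A e a b"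
  shows "(\<Prod>e\<in>E. x e) * hm n E k A \<le> hm n E (n*k) (\<lambda>_ p q. \<Sum>e\<in>E. x e * Udec k (A e) e p q)"
proof -
  let ?V = "\<lambda>p q. \<Sum>e\<in>E. x e * Udec k (A e) e p q"
  let ?T = "\<lambda>(\<psi>,\<alpha>). \<Prod>f\<in>E. ?V (\<psi> (Min f) * k + \<alpha> (Min f)) (\<psi> (Max f) * k + \<alpha> (Max f))"
  define id0 where "id0 = restrict (\<lambda>i. i) {..<n}"
  have id0: "id0 \<in> FS n n" unfolding id0_def by (rule FS_I) simp
  have Vnn: "0 \<le> ?V p q" for p q
    using k x nn by (auto simp: Udec_def intro!: sum_nonneg mult_nonneg_nonneg)
  have "hm n E (n*k) (\<lambda>_. ?V) = sum ?T (FS n n \<times> FS n k)"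
    by (rule hm_reindex[OF k E_sub'])
  also have "\<dots> \<ge> sum ?T ({id0} \<times> FS n k)"
    by (rule sum_mono2) (use id0 Vnn in \<open>auto intro!: prod_nonneg\<close>)
  moreover have "sum ?T ({id0} \<times> FS n k) = (\<Prod>e\<in>E. x e) * hm n E k A"
  proof -
    have "sum ?T ({id0} \<times> FS n k) = (\<Sum>\<alpha>\<in>FS n k. ?T (id0, \<alpha>))"
      by (simp add: sum.cartesian_product[symmetric])
    also have "\<dots> = (\<Sum>\<alpha>\<in>FS n k. (\<Prod>e\<in>E. x e) * (\<Prod>f\<in>E. A f (\<alpha> (Min f)) (\<alpha> (Max f))))"
    proof (rule sum.cong[OF refl])
      fix \<alpha> assume h: "\<alpha> \<in> FS n k"
      have "?T (id0, \<alpha>) = (\<Prod>f\<in>E. x f * A f (\<alpha> (Min f)) (\<alpha> (Max f)))"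
      proof (simp, rule prod.cong[OF refl])
        fix f assume f: "f \<in> E"
        have a: "\<alpha> (Min f) < k" "\<alpha> (Max f) < k" using FS_D[OF h] edge_props[OF f] by simp_all
        have i: "id0 (Min f) = Min f" "id0 (Max f) = Max f" using edge_props[OF f] by (simp_all add: id0_def)
        have "(\<Sum>e\<in>E. x e * Udec k (A e) e (id0 (Min f) * k + \<alpha> (Min f)) (id0 (Max f) * k + \<alpha> (Max f)))
            = (\<Sum>e\<in>E. if f = e then x e * A e (\<alpha> (Min f)) (\<alpha> (Max f)) else 0)"
          by (rule sum.cong[OF refl]) (simp add: i a Udec_eval edge_props[OF f])
        also have "\<dots> = x f * A f (\<alpha> (Min f)) (\<alpha> (Max f))"
          using f finE by simp
        finally show "(\<Sum>e\<in>E. x e * Udec k (A e) e (id0 (Min f) * k + \<alpha> (Min f)) (id0 (Max f) * k + \<alpha> (Max f)))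
            = x f * A f (\<alpha> (Min f)) (\<alpha> (Max f))" .
      qed
      then show "?T (id0, \<alpha>) = (\<Prod>e\<in>E. x e) * (\<Prod>f\<in>E. A f (\<alpha> (Min f)) (\<alpha> (Max f)))"
        by (simp add: prod.distrib)
    qed
    also have "\<dots> = (\<Prod>e\<in>E. x e) * hm n E k A"
      by (simp add: hm_def sum_distrib_left)
    finally show ?thesis .
  qed
  ultimately show ?thesis by simp
qed

lemma root_pow: assumes "X \<ge> 0" "N > 0" shows "(X powr (1 / real N)) ^ N = X"
proof (cases "X = 0")
  case True then show ?thesis using assms by simp
next
  case False
  then have "X > 0" using assms by simp
  then have "(X powr (1 / real N)) ^ N = (X powr (1 / real N)) powr real N"
    by (simp add: powr_realpow)
  also have "\<dots> = X" using \<open>X > 0\<close> assms by (simp add: powr_powr)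
  finally show ?thesis .
qed

lemma Udec_sym: "symk k M \<Longrightarrow> k > 0 \<Longrightarrow> symk K (\<lambda>p q. c * Udec k M e p q)"
  unfolding symk_def Udec_def by (auto simp: insert_commute)

lemma holder0:
  assumes k: "k > 0" and A: "\<And>e. e \<in> E \<Longrightarrow> symk k (A e) \<and> posk k (A e)"
  shows "hm n E k A \<le> real n ^ n * real (card E) ^ card E * (\<Prod>e\<in>E. hm n E k (\<lambda>_. A e) powr (1 / real (card E)))"
proof -
  define m where "m = real (card E)"
  have m: "m > 0" using m_pos by (simp add: m_def)
  define y where "y e = hm n E k (\<lambda>_. A e)" for e
  have yp: "y e > 0" if "e \<in> E" for e
    unfolding y_def using A[OF that] k by (intro hm_pos) (auto simp: posk_def)
  define x where "x e = y e powr (- 1 / m)" for e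
  have xp: "x e > 0" if "e \<in> E" for e using yp[OF that] by (simp add: x_def)
  define K where "K = n * k"
  have K: "K > 0" using n_pos k by (simp add: K_def)
  define V where "V = (\<lambda>p q. \<Sum>e\<in>E. x e * Udec k (A e) e p q)"
  have nnA: "\<And>e a b. e \<in> E \<Longrightarrow> a < k \<Longrightarrow> b < k \<Longrightarrow> 0 \<le> A e a b"
    using A by (fastforce simp: posk_def)
  have Unn: "0 \<le> Udec k (A e) e p q" if "e \<in> E" for e p q
    using nnA[OF that] k by (simp add: Udec_def)
  have Vnn: "0 \<le> V p q" for p q
    unfolding V_def using xp Unn by (meson less_imp_le mult_nonneg_nonneg sum_nonneg)
  have "nrm n E K V \<le> (\<Sum>e\<in>E. nrm n E K (\<lambda>p q. x e * Udec k (A e) e p q))"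
    unfolding V_def
    by (rule tri_sum[OF finE K]) (use A k in \<open>auto intro!: Udec_sym\<close>)
  also have "\<dots> = (\<Sum>e\<in>E. x e * nrm n E K (Udec k (A e) e))"
    using xp by (intro sum.cong refl nrm_scale) (simp add: less_imp_le)
  also have "\<dots> \<le> (\<Sum>e\<in>E. (real n ^ n) powr (1 / m))"
  proof (rule sum_mono)
    fix e assume e: "e \<in> E"
    have "nrm n E K (Udec k (A e) e) = hm n E K (\<lambda>_. Udec k (A e) e) powr (1 / m)"
      unfolding nrm_def m_def using Unn[OF e] by simp
    also have "\<dots> \<le> (real n ^ n * y e) powr (1 / m)"
      unfolding y_def K_def using m
      by (intro powr_mono2 decA[OF k e] hm_nonneg) (use Unn nnA e in auto)
    also have "\<dots> = (real n ^ n) powr (1 / m) * y e powr (1 / m)"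
      using yp[OF e] by (simp add: powr_mult)
    finally have "x e * nrm n E K (Udec k (A e) e) \<le> x e * ((real n ^ n) powr (1 / m) * y e powr (1 / m))"
      using xp[OF e] by (simp add: mult_left_mono)
    also have "\<dots> = (real n ^ n) powr (1 / m) * (y e powr (- 1 / m) * y e powr (1 / m))"
      by (simp add: x_def)
    also have "y e powr (- 1 / m) * y e powr (1 / m) = 1"
      using yp[OF e] by (simp add: powr_add[symmetric])
    finally show "x e * nrm n E K (Udec k (A e) e) \<le> (real n ^ n) powr (1 / m)" by simp
  qed
  also have "\<dots> = m * (real n ^ n) powr (1 / m)" by (simp add: m_def)
  finally have nV: "hm n E K (\<lambda>_. V) powr (1 / m) \<le> m * (real n ^ n) powr (1 / m)"
    unfolding nrm_def m_def using Vnn by simp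
  have "hm n E K (\<lambda>_. V) = (hm n E K (\<lambda>_. V) powr (1 / m)) ^ card E"
    unfolding m_def by (rule root_pow[symmetric]) (use Vnn m_pos in \<open>auto intro: hm_nonneg\<close>)
  also have "\<dots> \<le> (m * (real n ^ n) powr (1 / m)) ^ card E"
    by (rule power_mono[OF nV]) simp
  also have "\<dots> = m ^ card E * real n ^ n"
    unfolding power_mult_distrib m_def by (subst root_pow) (use m_pos in auto)
  finally have hV: "hm n E K (\<lambda>_. V) \<le> m ^ card E * real n ^ n" .
  have "(\<Prod>e\<in>E. x e) * hm n E k A \<le> hm n E K (\<lambda>_. V)"
    unfolding K_def V_def by (rule decB[OF k]) (use xp nnA in \<open>auto simp: less_imp_le\<close>)
  with hV have *: "(\<Prod>e\<in>E. x e) * hm n E k A \<le> m ^ card E * real n ^ n" by linarith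
  have px: "(\<Prod>e\<in>E. x e) * (\<Prod>e\<in>E. y e powr (1 / m)) = 1"
    unfolding prod.distrib[symmetric] x_def
    by (rule prod.neutral) (auto simp: powr_add[symmetric] dest: yp)
  have ppos: "0 \<le> (\<Prod>e\<in>E. y e powr (1 / m))" by (simp add: prod_nonneg)
  have "hm n E k A = ((\<Prod>e\<in>E. x e) * hm n E k A) * (\<Prod>e\<in>E. y e powr (1 / m))"
    using px by (simp add: algebra_simps)
  also have "\<dots> \<le> (m ^ card E * real n ^ n) * (\<Prod>e\<in>E. y e powr (1 / m))"
    by (rule mult_right_mono[OF * ppos])
  finally show ?thesis by (simp add: m_def y_def algebra_simps)
qed

lemma tens_sym: "symk k M \<Longrightarrow> k > 0 \<Longrightarrow> symk (k*k) (tens k M M)"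
  unfolding symk_def tens_def by (simp add: less_mult_imp_div_less)

lemma tens_pos: "posk k M \<Longrightarrow> k > 0 \<Longrightarrow> posk (k*k) (tens k M M)"
  unfolding posk_def tens_def by (simp add: less_mult_imp_div_less)

lemma hs_tens: "k > 0 \<Longrightarrow> hm n E (k*k) (\<lambda>_. tens k M M) = hm n E k (\<lambda>_. M) ^ 2"
  using hm_tens[of k E n k "\<lambda>_. M" "\<lambda>_. M", OF _ E_sub'] by (simp add: power2_eq_square)

lemma holder_pow:
  "k > 0 \<Longrightarrow> (\<And>e. e \<in> E \<Longrightarrow> symk k (A e) \<and> posk k (A e)) \<Longrightarrow>
   hm n E k A ^ (2 ^ r) \<le> real n ^ n * real (card E) ^ card E * (\<Prod>e\<in>E. hm n E k (\<lambda>_. A e) powr (1 / real (card E))) ^ (2 ^ r)"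
proof (induction r arbitrary: k A)
  case 0
  then show ?case using holder0 by simp
next
  case (Suc r)
  define A' where "A' e = tens k (A e) (A e)" for e
  have kk: "k * k > 0" using Suc.prems by simp
  have IH: "hm n E (k*k) A' ^ (2 ^ r) \<le> real n ^ n * real (card E) ^ card E * (\<Prod>e\<in>E. hm n E (k*k) (\<lambda>_. A' e) powr (1 / real (card E))) ^ (2 ^ r)"
    using Suc.IH[OF kk] Suc.prems unfolding A'_def by (simp add: tens_sym tens_pos)
  have P: "hm n E (k*k) A' = hm n E k A ^ 2"
    unfolding A'_def using hm_tens[of k E n k A A, OF _ E_sub'] Suc.prems by (simp add: power2_eq_square)
  have Q: "(\<Prod>e\<in>E. hm n E (k*k) (\<lambda>_. A' e) powr (1 / real (card E))) = (\<Prod>e\<in>E. hm n E k (\<lambda>_. A e) powr (1 / real (card E))) ^ 2"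
  proof -
    have "(\<Prod>e\<in>E. hm n E (k*k) (\<lambda>_. A' e) powr (1 / real (card E))) = (\<Prod>e\<in>E. (hm n E k (\<lambda>_. A e) powr (1 / real (card E))) ^ 2)"
    proof (rule prod.cong[OF refl])
      fix e assume e: "e \<in> E"
      have nn: "0 \<le> hm n E k (\<lambda>_. A e)"
        using Suc.prems(2)[OF e] by (intro hm_nonneg) (auto simp: posk_def less_imp_le)
      show "hm n E (k*k) (\<lambda>_. A' e) powr (1 / real (card E)) = (hm n E k (\<lambda>_. A e) powr (1 / real (card E))) ^ 2"
        unfolding A'_def hs_tens[OF Suc.prems(1)] using nn by (simp add: power2_eq_square powr_mult)
    qed
    then show ?thesis by (simp add: prod_power_distrib)
  qed
  show ?case using IH unfolding P Q by (simp add: power_mult[symmetric] mult.commute)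
qed

lemma holder:
  assumes k: "k > 0" and A: "\<And>e. e \<in> E \<Longrightarrow> symk k (A e) \<and> posk k (A e)"
  shows "hm n E k A \<le> (\<Prod>e\<in>E. hm n E k (\<lambda>_. A e) powr (1 / real (card E)))"
proof (rule ccontr)
  define P where "P = hm n E k A"
  define Q where "Q = (\<Prod>e\<in>E. hm n E k (\<lambda>_. A e) powr (1 / real (card E)))"
  define C where "C = real n ^ n * real (card E) ^ card E"
  assume "\<not> hm n E k A \<le> (\<Prod>e\<in>E. hm n E k (\<lambda>_. A e) powr (1 / real (card E)))"
  then have PQ: "P > Q" by (simp add: P_def Q_def)
  have Qp: "Q > 0" unfolding Q_def
  proof (rule prod_pos)
    fix e assume e: "e \<in> E"
    have "hm n E k (\<lambda>_. A e) > 0" using A[OF e] k by (intro hm_pos) (auto simp: posk_def)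
    then show "hm n E k (\<lambda>_. A e) powr (1 / real (card E)) > 0" by simp
  qed
  define t where "t = P / Q"
  have t1: "t > 1" using PQ Qp by (simp add: t_def)
  have bound: "t ^ (2 ^ r) \<le> C" for r
  proof -
    have "P ^ (2 ^ r) \<le> C * Q ^ (2 ^ r)" using holder_pow[OF k A] by (simp add: P_def Q_def C_def)
    moreover have "P ^ (2 ^ r) = t ^ (2 ^ r) * Q ^ (2 ^ r)" using Qp by (simp add: t_def power_divide)
    ultimately show ?thesis using Qp by simp
  qed
  obtain r :: nat where r: "C / (t - 1) < real r" using reals_Archimedean2 by blast
  have "C < real r * (t - 1)" using r t1 by (simp add: divide_less_eq)
  also have "\<dots> \<le> real (2 ^ r) * (t - 1)"
    using t1 by (intro mult_right_mono) (simp_all add: less_imp_le less_exp)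
  also have "\<dots> < 1 + real (2 ^ r) * (t - 1)" by simp
  also have "\<dots> \<le> (1 + (t - 1)) ^ (2 ^ r)"
    using t1 by (intro Bernoulli_inequality) simp
  also have "\<dots> \<le> C" using bound by simp
  finally show False by simp
qed

definition Lfun :: "nat \<Rightarrow> (nat \<Rightarrow> nat \<Rightarrow> real) \<Rightarrow> (nat \<Rightarrow> nat \<Rightarrow> real) \<Rightarrow> nat set \<Rightarrow> real" where
  "Lfun k B \<Phi> e = hm n E k (\<lambda>f. if f = e then \<Phi> else B)"

lemma prod_if_remove: "(\<Prod>x\<in>S-{e}. (if x = e then P else Q) (g x) (h x)) = (\<Prod>x\<in>S-{e}. Q (g x) (h x))"
  by (rule prod.cong) auto

lemma Lfun_eq: "e \<in> E \<Longrightarrow> Lfun k B \<Phi> e = (\<Sum>\<phi>\<in>FS n k. \<Phi> (\<phi> (Min e)) (\<phi> (Max e)) * (\<Prod>f\<in>E-{e}. B (\<phi> (Min f)) (\<phi> (Max f))))"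
  unfolding Lfun_def hm_def
  by (rule sum.cong[OF refl]) (simp only: prod.remove[OF finE] prod_if_remove, simp)

lemma hm_remove: "e \<in> E \<Longrightarrow> hm n E k A = (\<Sum>\<phi>\<in>FS n k. A e (\<phi> (Min e)) (\<phi> (Max e)) * (\<Prod>f\<in>E-{e}. A f (\<phi> (Min f)) (\<phi> (Max f))))"
  unfolding hm_def by (rule sum.cong[OF refl]) (simp add: prod.remove[OF finE])

lemma deriv_g:
  "((\<lambda>\<epsilon>. hm n E k (\<lambda>_ a b. B a b + \<epsilon> * \<Phi> a b)) has_field_derivative (\<Sum>e\<in>E. Lfun k B \<Phi> e)) (at 0)"
proof -
  note [derivative_intros] = has_field_derivative_prod
  have "((\<lambda>\<epsilon>. \<Sum>\<phi>\<in>FS n k. \<Prod>f\<in>E. B (\<phi> (Min f)) (\<phi> (Max f)) + \<epsilon> * \<Phi> (\<phi> (Min f)) (\<phi> (Max f))) has_field_derivative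
      (\<Sum>\<phi>\<in>FS n k. \<Sum>f\<in>E. \<Phi> (\<phi> (Min f)) (\<phi> (Max f)) * (\<Prod>f'\<in>E-{f}. B (\<phi> (Min f')) (\<phi> (Max f')) + 0 * \<Phi> (\<phi> (Min f')) (\<phi> (Max f'))))) (at 0)"
    by (rule DERIV_sum, rule has_field_derivative_prod) (auto intro!: derivative_eq_intros)
  moreover have "(\<Sum>\<phi>\<in>FS n k. \<Sum>f\<in>E. \<Phi> (\<phi> (Min f)) (\<phi> (Max f)) * (\<Prod>f'\<in>E-{f}. B (\<phi> (Min f')) (\<phi> (Max f')) + 0 * \<Phi> (\<phi> (Min f')) (\<phi> (Max f'))))
      = (\<Sum>e\<in>E. Lfun k B \<Phi> e)"
    by (simp add: Lfun_eq sum.swap[of _ "FS n k"] cong: sum.cong)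
  ultimately show ?thesis unfolding hm_def by simp
qed

lemma deriv_eq:
  assumes k: "k > 0" and B: "symk k B" "posk k B" and Phi: "symk k \<Phi>" and e0: "e0 \<in> E"
  shows "real (card E) * Lfun k B \<Phi> e0 = (\<Sum>e\<in>E. Lfun k B \<Phi> e)"
proof -
  define N where "N = card E"
  have N: "N > 0" using m_pos by (simp add: N_def)
  define c where "c = hm n E k (\<lambda>_. B)"
  have c: "c > 0" unfolding c_def using B k by (intro hm_pos) (auto simp: posk_def)
  define L where "L = Lfun k B \<Phi> e0"
  define g where "g \<epsilon> = hm n E k (\<lambda>_ a b. B a b + \<epsilon> * \<Phi> a b)" for \<epsilon>
  define S where "S = (\<Sum>e\<in>E. Lfun k B \<Phi> e)"
  define p where "p \<epsilon> = g \<epsilon> * c ^ (N - 1) - (c + \<epsilon> * L) ^ N" for \<epsilon>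
  define I where "I = {..<k} \<times> {..<k}"
  have I: "finite I" "I \<noteq> {}" using k by (auto simp: I_def)
  define \<beta> where "\<beta> = Min ((\<lambda>(a,b). B a b) ` I)"
  define \<gamma> where "\<gamma> = Max ((\<lambda>(a,b). \<bar>\<Phi> a b\<bar>) ` I) + 1"
  have \<beta>: "\<beta> > 0" unfolding \<beta>_def using I B(2) by (auto simp: posk_def I_def)
  have \<beta>le: "\<beta> \<le> B a b" if "a < k" "b < k" for a b
    unfolding \<beta>_def using I that by (intro Min_le) (auto simp: I_def)
  have \<gamma>ge: "\<bar>\<Phi> a b\<bar> < \<gamma>" if "a < k" "b < k" for a b
  proof -
    have "\<bar>\<Phi> a b\<bar> \<le> Max ((\<lambda>(a,b). \<bar>\<Phi> a b\<bar>) ` I)"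
      using I that by (intro Max_ge) (auto simp: I_def)
    then show ?thesis by (simp add: \<gamma>_def)
  qed
  have \<gamma>: "\<gamma> > 0" using \<gamma>ge[of 0 0] k by simp
  define \<delta> where "\<delta> = \<beta> / \<gamma>"
  have \<delta>: "\<delta> > 0" using \<beta> \<gamma> by (simp add: \<delta>_def)
  have posE: "posk k (\<lambda>a b. B a b + \<epsilon> * \<Phi> a b)" if "\<bar>\<epsilon>\<bar> < \<delta>" for \<epsilon>
    unfolding posk_def
  proof (intro allI impI)
    fix a b assume ab: "a < k" "b < k"
    have "\<bar>\<epsilon> * \<Phi> a b\<bar> \<le> \<bar>\<epsilon>\<bar> * \<gamma>"
      using \<gamma>ge[OF ab] by (simp add: abs_mult mult_left_mono)
    also have "\<dots> < \<delta> * \<gamma>" using that \<gamma> by (simp add: mult_strict_right_mono)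
    also have "\<dots> = \<beta>" using \<gamma> by (simp add: \<delta>_def)
    finally show "0 < B a b + \<epsilon> * \<Phi> a b" using \<beta>le[OF ab] by linarith
  qed
  have pnn: "p 0 \<le> p \<epsilon>" if "\<bar>0 - \<epsilon>\<bar> < \<delta>" for \<epsilon>
  proof -
    have e: "\<bar>\<epsilon>\<bar> < \<delta>" using that by simp
    define A where "A f = (if f = e0 then (\<lambda>a b. B a b + \<epsilon> * \<Phi> a b) else B)" for f
    have A: "symk k (A f) \<and> posk k (A f)" if "f \<in> E" for f
      using B Phi posE[OF e] unfolding A_def symk_def by auto
    have h: "hm n E k A \<le> (\<Prod>f\<in>E. hm n E k (\<lambda>_. A f) powr (1 / real N))"
      unfolding N_def by (rule holder[OF k A])
    have lhs: "hm n E k A = c + \<epsilon> * L"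
    proof -
      have "hm n E k A = (\<Sum>\<phi>\<in>FS n k. (B (\<phi> (Min e0)) (\<phi> (Max e0)) + \<epsilon> * \<Phi> (\<phi> (Min e0)) (\<phi> (Max e0))) * (\<Prod>f\<in>E-{e0}. B (\<phi> (Min f)) (\<phi> (Max f))))"
        by (subst hm_remove[OF e0]) (simp only: A_def prod_if_remove, simp)
      also have "\<dots> = c + \<epsilon> * L"
        unfolding c_def L_def Lfun_eq[OF e0] hm_remove[OF e0, of k "\<lambda>_. B"]
        by (simp add: algebra_simps sum.distrib sum_distrib_left)
      finally show ?thesis .
    qed
    have rhs: "(\<Prod>f\<in>E. hm n E k (\<lambda>_. A f) powr (1 / real N)) = g \<epsilon> powr (1 / real N) * (c powr (1 / real N)) ^ (N - 1)"
    proof -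
      have "(\<Prod>f\<in>E. hm n E k (\<lambda>_. A f) powr (1 / real N)) = hm n E k (\<lambda>_. A e0) powr (1 / real N) * (\<Prod>f\<in>E-{e0}. hm n E k (\<lambda>_. A f) powr (1 / real N))"
        by (rule prod.remove[OF finE e0])
      also have "(\<Prod>f\<in>E-{e0}. hm n E k (\<lambda>_. A f) powr (1 / real N)) = (\<Prod>f\<in>E-{e0}. c powr (1 / real N))"
        by (rule prod.cong) (auto simp: A_def c_def)
      also have "\<dots> = (c powr (1 / real N)) ^ (N - 1)"
        using e0 finE by (simp add: card_Diff_singleton N_def)
      finally show ?thesis by (simp add: A_def g_def)
    qed
    have gnn: "g \<epsilon> \<ge> 0" unfolding g_def using posE[OF e] by (intro hm_nonneg) (auto simp: posk_def less_imp_le)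
    have lpos: "0 \<le> c + \<epsilon> * L" using lhs hm_pos[OF k, of A] A by (fastforce simp: posk_def)
    have "(c + \<epsilon> * L) ^ N \<le> (g \<epsilon> powr (1 / real N) * (c powr (1 / real N)) ^ (N - 1)) ^ N"
      using h lhs rhs lpos by (intro power_mono) simp_all
    also have "\<dots> = g \<epsilon> * c ^ (N - 1)"
    proof -
      have "((c powr (1 / real N)) ^ (N - 1)) ^ N = ((c powr (1 / real N)) ^ N) ^ (N - 1)"
        by (simp add: power_mult[symmetric] mult.commute)
      then show ?thesis
        using root_pow[OF gnn N] root_pow[of c N] c N by (simp add: power_mult_distrib)
    qed
    finally have "(c + \<epsilon> * L) ^ N \<le> g \<epsilon> * c ^ (N - 1)" .
    moreover have "p 0 = 0"
      unfolding p_def g_def c_def using N by (simp add: power_eq_if)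
    ultimately show ?thesis unfolding p_def by simp
  qed
  have dp: "(p has_field_derivative (S * c ^ (N - 1) - real N * (c + 0 * L) ^ (N - 1) * L)) (at 0)"
    unfolding p_def g_def S_def
    by (rule derivative_eq_intros deriv_g refl | simp)+
  have "S * c ^ (N - 1) - real N * (c + 0 * L) ^ (N - 1) * L = 0"
    by (rule DERIV_local_min[OF dp \<delta>]) (use pnn in auto)
  then have "(S - real N * L) * c ^ (N - 1) = 0" by (simp add: algebra_simps)
  then have "S = real N * L" using c by simp
  then show ?thesis by (simp add: S_def N_def L_def)
qed

lemma Lfun_equal:
  assumes k: "k > 0" and B: "symk k B" "posk k B" and Phi: "symk k \<Phi>" and e: "e \<in> E" "e' \<in> E"
  shows "Lfun k B \<Phi> e = Lfun k B \<Phi> e'"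
proof -
  have "real (card E) * Lfun k B \<Phi> e = real (card E) * Lfun k B \<Phi> e'"
    using deriv_eq[OF k B Phi e(1)] deriv_eq[OF k B Phi e(2)] by linarith
  then show ?thesis using m_pos by simp
qed

lemma Lfun_lim:
  assumes e: "e \<in> E"
  shows "((\<lambda>\<delta>. Lfun k (\<lambda>a b. B a b + \<delta>) \<Phi> e) \<longlongrightarrow> Lfun k B \<Phi> e) (at_right 0)"
proof -
  have "((\<lambda>\<delta>. \<Sum>\<phi>\<in>FS n k. \<Phi> (\<phi> (Min e)) (\<phi> (Max e)) * (\<Prod>f\<in>E-{e}. B (\<phi> (Min f)) (\<phi> (Max f)) + \<delta>))
     \<longlongrightarrow> (\<Sum>\<phi>\<in>FS n k. \<Phi> (\<phi> (Min e)) (\<phi> (Max e)) * (\<Prod>f\<in>E-{e}. B (\<phi> (Min f)) (\<phi> (Max f)) + 0))) (at_right 0)"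
    by (intro tendsto_intros)
  then show ?thesis unfolding Lfun_eq[OF e] by simp
qed

lemma Lfun_equal_nn:
  assumes k: "k > 0" and B: "symk k B" "\<forall>a<k. \<forall>b<k. 0 \<le> B a b" and Phi: "symk k \<Phi>" and e: "e \<in> E" "e' \<in> E"
  shows "Lfun k B \<Phi> e = Lfun k B \<Phi> e'"
proof (rule tendsto_unique[OF trivial_limit_at_right_real Lfun_lim[OF e(1)]])
  have ev: "\<forall>\<^sub>F \<delta> in at_right (0::real). Lfun k (\<lambda>a b. B a b + \<delta>) \<Phi> e' = Lfun k (\<lambda>a b. B a b + \<delta>) \<Phi> e"
  proof (rule eventually_mono[OF eventually_at_right_less])
    fix \<delta> :: real assume d: "0 < \<delta>"
    show "Lfun k (\<lambda>a b. B a b + \<delta>) \<Phi> e' = Lfun k (\<lambda>a b. B a b + \<delta>) \<Phi> e"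
      by (rule Lfun_equal[OF k _ _ Phi e(2) e(1)]) (use B d in \<open>auto simp: symk_def posk_def add_nonneg_pos\<close>)
  qed
  show "((\<lambda>\<delta>. Lfun k (\<lambda>a b. B a b + \<delta>) \<Phi> e) \<longlongrightarrow> Lfun k B \<Phi> e') (at_right 0)"
    by (rule Lim_transform_eventually[OF Lfun_lim[OF e(2)] ev])
qed

definition BS :: "nat set set \<Rightarrow> nat \<Rightarrow> nat \<Rightarrow> real" where
  "BS S a b = (if {a, b} \<in> S then 1 else 0)"

definition Phi1 :: "nat set \<Rightarrow> nat \<Rightarrow> nat \<Rightarrow> real" where
  "Phi1 e1 a b = (if {a, b} = e1 then 1 else 0)"

lemma prod_ind: "finite A \<Longrightarrow> (\<Prod>x\<in>A. (if P x then 1 else 0 :: real)) = (if \<forall>x\<in>A. P x then 1 else 0)"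
  by (induction A rule: finite_induct) auto

lemma img_pair: "e \<in> E \<Longrightarrow> {\<phi> (Min e), \<phi> (Max e)} = \<phi> ` e"
  using edge_props(4)[of e] by (metis image_insert image_empty)

definition img :: "nat set \<Rightarrow> (nat \<Rightarrow> nat) \<Rightarrow> nat set set" where
  "img e \<phi> = (\<lambda>f. \<phi> ` f) ` (E - {e})"

lemma Lfun_count:
  assumes e: "e \<in> E"
  shows "Lfun n (BS S) (Phi1 e1) e = real (card {\<phi>\<in>FS n n. \<phi> ` e = e1 \<and> img e \<phi> \<subseteq> S})"
proof -
  have "Lfun n (BS S) (Phi1 e1) e = (\<Sum>\<phi>\<in>FS n n. if \<phi> ` e = e1 \<and> img e \<phi> \<subseteq> S then 1 else 0)"
    unfolding Lfun_eq[OF e]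
  proof (rule sum.cong[OF refl])
    fix \<phi> assume "\<phi> \<in> FS n n"
    have "(\<Prod>f\<in>E - {e}. BS S (\<phi> (Min f)) (\<phi> (Max f))) = (\<Prod>f\<in>E - {e}. if \<phi> ` f \<in> S then 1 else 0)"
      by (rule prod.cong[OF refl]) (simp add: BS_def img_pair)
    also have "\<dots> = (if \<forall>f\<in>E - {e}. \<phi> ` f \<in> S then 1 else 0)"
      using finE by (simp add: prod_ind)
    finally show "Phi1 e1 (\<phi> (Min e)) (\<phi> (Max e)) * (\<Prod>f\<in>E - {e}. BS S (\<phi> (Min f)) (\<phi> (Max f))) =
         (if \<phi> ` e = e1 \<and> img e \<phi> \<subseteq> S then 1 else 0)"
      by (simp add: Phi1_def img_pair[OF e] img_def image_subset_iff)
  qed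
  also have "\<dots> = real (card {\<phi>\<in>FS n n. \<phi> ` e = e1 \<and> img e \<phi> \<subseteq> S})"
    by (simp add: sum.inter_filter[symmetric])
  finally show ?thesis .
qed

lemma count_equal:
  assumes e: "e \<in> E" "e' \<in> E"
  shows "card {\<phi>\<in>FS n n. \<phi> ` e = e1 \<and> img e \<phi> \<subseteq> S} = card {\<phi>\<in>FS n n. \<phi> ` e' = e1 \<and> img e' \<phi> \<subseteq> S}"
proof -
  have "Lfun n (BS S) (Phi1 e1) e = Lfun n (BS S) (Phi1 e1) e'"
    by (rule Lfun_equal_nn[OF n_pos _ _ _ e]) (auto simp: symk_def BS_def Phi1_def insert_commute)
  then show ?thesis unfolding Lfun_count[OF e(1)] Lfun_count[OF e(2)] by simp
qed

definition Cc :: "nat set \<Rightarrow> nat set \<Rightarrow> nat set set \<Rightarrow> nat" where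
  "Cc e1 e S = card {\<phi>\<in>FS n n. \<phi> ` e = e1 \<and> img e \<phi> = S}"

lemma Ac_split:
  assumes "finite S"
  shows "card {\<phi>\<in>FS n n. \<phi> ` e = e1 \<and> img e \<phi> \<subseteq> S} = (\<Sum>T\<in>Pow S. Cc e1 e T)"
proof -
  have "{\<phi>\<in>FS n n. \<phi> ` e = e1 \<and> img e \<phi> \<subseteq> S} = (\<Union>T\<in>Pow S. {\<phi>\<in>FS n n. \<phi> ` e = e1 \<and> img e \<phi> = T})"
    by auto
  moreover have "card (\<Union>T\<in>Pow S. {\<phi>\<in>FS n n. \<phi> ` e = e1 \<and> img e \<phi> = T}) = (\<Sum>T\<in>Pow S. Cc e1 e T)"
    unfolding Cc_def by (rule card_UN_disjoint) (use assms in auto)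
  ultimately show ?thesis by simp
qed

lemma Cc_equal:
  assumes e: "e \<in> E" "e' \<in> E" and S: "finite S"
  shows "Cc e1 e S = Cc e1 e' S"
  using S
proof (induction S rule: finite_psubset_induct)
  case (psubset S)
  have fin: "finite (Pow S)" using psubset.hyps by simp
  have IH: "(\<Sum>T\<in>Pow S - {S}. Cc e1 e T) = (\<Sum>T\<in>Pow S - {S}. Cc e1 e' T)"
    by (rule sum.cong[OF refl]) (auto intro!: psubset.IH)
  have "card {\<phi>\<in>FS n n. \<phi> ` e = e1 \<and> img e \<phi> \<subseteq> S} = Cc e1 e S + (\<Sum>T\<in>Pow S - {S}. Cc e1 e T)"
    unfolding Ac_split[OF psubset.hyps] by (rule sum.remove[OF fin]) simp
  moreover have "card {\<phi>\<in>FS n n. \<phi> ` e' = e1 \<and> img e' \<phi> \<subseteq> S} = Cc e1 e' S + (\<Sum>T\<in>Pow S - {S}. Cc e1 e' T)"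
    unfolding Ac_split[OF psubset.hyps] by (rule sum.remove[OF fin]) simp
  ultimately show ?case using count_equal[OF e, of e1 S] IH by simp
qed

lemma auto_exists:
  assumes e0: "e0 \<in> E" and e1: "e1 \<in> E"
  shows "\<exists>\<sigma>. graph_automorphism n E \<sigma> \<and> \<sigma> ` e0 = e1"
proof -
  define id0 where "id0 = restrict (\<lambda>i. i) {..<n}"
  have id0: "id0 \<in> FS n n" unfolding id0_def by (rule FS_I) simp
  have idf: "id0 ` f = f" if "f \<in> E" for f
  proof -
    have fs: "f \<subseteq> {..<n}" using E_sub that by auto
    have "id0 ` f = (\<lambda>x. x) ` f" by (rule image_cong[OF refl]) (use fs in \<open>auto simp: id0_def\<close>)
    then show ?thesis by simp
  qed
  have "img e1 id0 = E - {e1}" unfolding img_def using idf by (auto simp: image_iff)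
  then have "id0 \<in> {\<phi>\<in>FS n n. \<phi> ` e1 = e1 \<and> img e1 \<phi> = E - {e1}}" using id0 idf[OF e1] by simp
  moreover have "finite {\<phi>\<in>FS n n. \<phi> ` e1 = e1 \<and> img e1 \<phi> = E - {e1}}" by simp
  ultimately have "Cc e1 e1 (E - {e1}) > 0" unfolding Cc_def by (auto simp: card_gt_0_iff)
  then have "Cc e1 e0 (E - {e1}) > 0" using Cc_equal[OF e1 e0, of "E - {e1}" e1] finE by simp
  then have "{\<phi>\<in>FS n n. \<phi> ` e0 = e1 \<and> img e0 \<phi> = E - {e1}} \<noteq> {}"
    unfolding Cc_def by (metis card.empty less_irrefl)
  then obtain \<phi> where \<phi>: "\<phi> \<in> FS n n" "\<phi> ` e0 = e1" "img e0 \<phi> = E - {e1}"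
    by blast
  have imgE: "(\<lambda>f. \<phi> ` f) ` E = E"
  proof -
    have "(\<lambda>f. \<phi> ` f) ` E = insert (\<phi> ` e0) ((\<lambda>f. \<phi> ` f) ` (E - {e0}))" using e0 by blast
    also have "\<dots> = E" using \<phi> e1 unfolding img_def by auto
    finally show ?thesis .
  qed
  define N where "N = \<Union>E"
  have Nsub: "N \<subseteq> {..<n}" using E_sub by (auto simp: N_def)
  have finN: "finite N" using finite_subset[OF Nsub] by simp
  have phiN: "\<phi> ` N = N"
    unfolding N_def image_Union using imgE by simp
  have injN: "inj_on \<phi> N" by (rule eq_card_imp_inj_on[OF finN]) (simp add: phiN)
  define \<sigma> where "\<sigma> x = (if x \<in> N then \<phi> x else x)" for x
  have sN: "\<sigma> ` N = N" using phiN by (simp add: \<sigma>_def)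
  have inj: "inj_on \<sigma> {..<n}"
  proof (rule inj_onI)
    fix x y assume xy: "x \<in> {..<n}" "y \<in> {..<n}" "\<sigma> x = \<sigma> y"
    show "x = y"
    proof (cases "x \<in> N"; cases "y \<in> N")
      assume "x \<in> N" "y \<in> N" then show ?thesis using xy injN by (simp add: \<sigma>_def inj_on_def)
    next
      assume "x \<in> N" "y \<notin> N"
      then have "\<phi> x \<in> N" using phiN by blast
      then show ?thesis using xy \<open>x \<in> N\<close> \<open>y \<notin> N\<close> by (simp add: \<sigma>_def)
    next
      assume "x \<notin> N" "y \<in> N"
      then have "\<phi> y \<in> N" using phiN by blast
      then show ?thesis using xy \<open>x \<notin> N\<close> \<open>y \<in> N\<close> by (simp add: \<sigma>_def)
    next
      assume "x \<notin> N" "y \<notin> N" then show ?thesis using xy by (simp add: \<sigma>_def)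
    qed
  qed
  have surj: "\<sigma> ` {..<n} = {..<n}"
  proof
    show "\<sigma> ` {..<n} \<subseteq> {..<n}"
    proof
      fix y assume "y \<in> \<sigma> ` {..<n}"
      then obtain x where x: "x < n" "y = \<sigma> x" by auto
      show "y \<in> {..<n}"
      proof (cases "x \<in> N")
        case True then have "\<phi> x \<in> N" using phiN by blast
        then show ?thesis using x True Nsub by (auto simp: \<sigma>_def)
      next
        case False then show ?thesis using x by (simp add: \<sigma>_def)
      qed
    qed
    show "{..<n} \<subseteq> \<sigma> ` {..<n}"
    proof
      fix y assume y: "y \<in> {..<n}"
      show "y \<in> \<sigma> ` {..<n}"
      proof (cases "y \<in> N")
        case True then have "y \<in> \<sigma> ` N" using sN by simp
        then show ?thesis using Nsub by (rule rev_subsetD[OF _ image_mono])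
      next
        case False then have "\<sigma> y = y" by (simp add: \<sigma>_def)
        then show ?thesis using y by (intro image_eqI[of y \<sigma> y]) simp_all
      qed
    qed
  qed
  have sf: "\<sigma> ` f = \<phi> ` f" if "f \<in> E" for f
  proof (rule image_cong[OF refl])
    fix x assume "x \<in> f" then have "x \<in> N" using that by (auto simp: N_def)
    then show "\<sigma> x = \<phi> x" by (simp add: \<sigma>_def)
  qed
  have aut: "graph_automorphism n E \<sigma>"
    unfolding graph_automorphism_def
  proof (intro conjI allI impI)
    show "bij_betw \<sigma> {..<n} {..<n}" using inj surj by (simp add: bij_betw_def)
    fix e assume e: "e \<subseteq> {..<n}"
    show "e \<in> E \<longleftrightarrow> \<sigma> ` e \<in> E"
    proof
      assume ee: "e \<in> E"
      have "\<phi> ` e \<in> (\<lambda>f. \<phi> ` f) ` E" using ee by (rule imageI)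
      then show "\<sigma> ` e \<in> E" using imgE sf[OF ee] by simp
    next
      assume "\<sigma> ` e \<in> E"
      then have "\<sigma> ` e \<in> (\<lambda>f. \<phi> ` f) ` E" using imgE by simp
      then obtain f where f: "f \<in> E" "\<phi> ` f = \<sigma> ` e" by (rule imageE) simp
      then have "\<sigma> ` f = \<sigma> ` e" using sf by simp
      moreover have "f \<subseteq> {..<n}" using E_sub f by auto
      ultimately have "f = e" using inj_on_image_eq_iff[OF inj _ e] by simp
      then show "e \<in> E" using f by simp
    qed
  qed
  show ?thesis using aut sf[OF e0] \<phi>(2) by auto
qed

lemma edge_trans: "edge_transitive n E"
  unfolding edge_transitive_def using auto_exists by blast

end


lemma hm_abs_nonneg: "0 \<le> hm n E k (\<lambda>_ a b. \<bar>M a b\<bar>)"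
  unfolding hm_def by (intro sum_nonneg prod_nonneg) simp

lemma graph_norm_step:
  assumes k: "k > 0" and E: "\<forall>e\<in>E. e \<subseteq> {..<n} \<and> e \<noteq> {}"
  shows "graph_norm n E (stepk k M) = nrm n E k M / (real k ^ n) powr (1 / real (card E))"
proof -
  have "(\<lambda>x y. \<bar>stepk k M x y\<bar>) = stepk k (\<lambda>a b. \<bar>M a b\<bar>)" by (simp add: stepk_def fun_eq_iff)
  then have "graph_norm n E (stepk k M) = (hm n E k (\<lambda>_ a b. \<bar>M a b\<bar>) / real k ^ n) powr (1 / real (card E))"
    unfolding graph_norm_def using hom_density_step[OF k E] by simp
  also have "\<dots> = nrm n E k M / (real k ^ n) powr (1 / real (card E))"
    unfolding nrm_def by (rule powr_divide)
  finally show ?thesis .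
qed

lemma tri_from_wn:
  assumes E: "\<forall>e\<in>E. e \<subseteq> {..<n} \<and> e \<noteq> {}" and wn: "weakly_norming n E"
    and K: "K > 0" and s: "symk K M" "symk K M'"
  shows "nrm n E K (\<lambda>a b. M a b + M' a b) \<le> nrm n E K M + nrm n E K M'"
proof -
  define c where "c = (real K ^ n) powr (1 / real (card E))"
  have c: "c > 0" using K by (simp add: c_def)
  have sM: "symk K (\<lambda>a b. M a b + M' a b)" using s by (simp add: symk_def)
  have eq: "(\<lambda>x y. stepk K M x y + stepk K M' x y) = stepk K (\<lambda>a b. M a b + M' a b)"
    by (simp add: stepk_def fun_eq_iff)
  have "graph_norm n E (\<lambda>x y. stepk K M x y + stepk K M' x y) \<le> graph_norm n E (stepk K M) + graph_norm n E (stepk K M')"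
    using wn stepk_kernel[OF K s(1)] stepk_kernel[OF K s(2)] unfolding weakly_norming_def by blast
  then have "nrm n E K (\<lambda>a b. M a b + M' a b) / c \<le> nrm n E K M / c + nrm n E K M' / c"
    unfolding eq graph_norm_step[OF K E] c_def .
  then show ?thesis using c by (simp add: divide_right_mono add_divide_distrib[symmetric] divide_le_cancel)
qed

theorem theorem1:
  fixes n :: nat and E :: "nat set set"
  assumes "simple_graph n E"
    and "E \<noteq> {}"
    and "weakly_norming n E"
  shows "edge_transitive n E"
proof -
  have Es: "\<forall>e\<in>E. e \<subseteq> {..<n} \<and> card e = 2" using assms(1) by (simp add: simple_graph_def)
  then have Es': "\<forall>e\<in>E. e \<subseteq> {..<n} \<and> e \<noteq> {}" by fastforce
  interpret wg n E
  proof
    show "\<forall>e\<in>E. e \<subseteq> {..<n} \<and> card e = 2" by (rule Es)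
    show "E \<noteq> {}" by (rule assms(2))
    fix K M M' assume "K > 0" "symk K M" "symk K M'"
    then show "nrm n E K (\<lambda>a b. M a b + M' a b) \<le> nrm n E K M + nrm n E K M'"
      by (rule tri_from_wn[OF Es' assms(3)])
  qed
  show ?thesis by (rule edge_trans)
qed

end
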